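(* Let $S$ be an AG-groupoid with a left identity, let $T$ be a left ideal of $S$ and let $B$ be a bi-ideal of $S$. Then $BT$ and $T^{2}B$ are bi-ideals of $S$.
   Context: An AG-groupoid (Abel-Grassmann's groupoid) is a set $S$ with a binary operation (written as juxtaposition) satisfying the left invertive law $(ab)c=(cb)a$ for all $a,b,c\in S$. A left identity is an element $e\in S$ with $ea=a$ for all $a\in S$. For nonempty subsets $A,B\subseteq S$, $AB=\{ab: a\in A, b\in B\}$ and $A^{2}=AA$. A left ideal is a nonempty subset $I$ with $SI\subseteq I$. A bi-ideal of $S$ is a nonempty subset $B$ with $BB\subseteq B$ (i.e. a sub-AG-groupoid) and $(BS)B\subseteq B$. *)

theory Defs
  imports Main
begin

definition AG_groupoid :: "'a set \<Rightarrow> ('a \<Rightarrow> 'a \<Rightarrow> 'a) \<Rightarrow> bool" where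
  "AG_groupoid S m \<longleftrightarrow> (\<forall>a\<in>S. \<forall>b\<in>S. m a b \<in> S) \<and>
     (\<forall>a\<in>S. \<forall>b\<in>S. \<forall>c\<in>S. m (m a b) c = m (m c b) a)"

definition left_identity :: "'a set \<Rightarrow> ('a \<Rightarrow> 'a \<Rightarrow> 'a) \<Rightarrow> 'a \<Rightarrow> bool" where
  "left_identity S m e \<longleftrightarrow> e \<in> S \<and> (\<forall>a\<in>S. m e a = a)"

definition setmult :: "('a \<Rightarrow> 'a \<Rightarrow> 'a) \<Rightarrow> 'a set \<Rightarrow> 'a set \<Rightarrow> 'a set" where
  "setmult m A B = {m a b | a b. a \<in> A \<and> b \<in> B}"

definition left_ideal :: "'a set \<Rightarrow> ('a \<Rightarrow> 'a \<Rightarrow> 'a) \<Rightarrow> 'a set \<Rightarrow> bool" where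
  "left_ideal S m I \<longleftrightarrow> I \<subseteq> S \<and> I \<noteq> {} \<and> setmult m S I \<subseteq> I"

definition bi_ideal :: "'a set \<Rightarrow> ('a \<Rightarrow> 'a \<Rightarrow> 'a) \<Rightarrow> 'a set \<Rightarrow> bool" where
  "bi_ideal S m B \<longleftrightarrow> B \<subseteq> S \<and> B \<noteq> {} \<and> setmult m B B \<subseteq> B \<and>
     setmult m (setmult m B S) B \<subseteq> B"

end

theory Submission
  imports Defs
begin

lemma setmult_iff: "x \<in> setmult m A B \<longleftrightarrow> (\<exists>a\<in>A. \<exists>b\<in>B. x = m a b)"
  unfolding setmult_def by blast

lemma smI: "a \<in> A \<Longrightarrow> b \<in> B \<Longrightarrow> m a b \<in> setmult m A B"
  unfolding setmult_def by blast

theorem proposition1: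
  fixes S :: "'a set" and m :: "'a \<Rightarrow> 'a \<Rightarrow> 'a" and T B :: "'a set"
  assumes "AG_groupoid S m"
    and "\<exists>e. left_identity S m e"
    and "left_ideal S m T"
    and "bi_ideal S m B"
  shows "bi_ideal S m (setmult m B T) \<and>
         bi_ideal S m (setmult m (setmult m T T) B)"
proof -
  obtain e where e: "e \<in> S" "\<And>a. a \<in> S \<Longrightarrow> m e a = a"
    using assms(2) unfolding left_identity_def by blast
  have cl: "\<And>a b. a \<in> S \<Longrightarrow> b \<in> S \<Longrightarrow> m a b \<in> S"
    and LI: "\<And>a b c. a \<in> S \<Longrightarrow> b \<in> S \<Longrightarrow> c \<in> S \<Longrightarrow> m (m a b) c = m (m c b) a"
    using assms(1) unfolding AG_groupoid_def by blast+
  have TS: "T \<subseteq> S" and Tne: "T \<noteq> {}" and Tl: "\<And>s t. s \<in> S \<Longrightarrow> t \<in> T \<Longrightarrow> m s t \<in> T"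
    using assms(3) unfolding left_ideal_def setmult_def by blast+
  have BS: "B \<subseteq> S" and Bne: "B \<noteq> {}" and BB: "\<And>a b. a \<in> B \<Longrightarrow> b \<in> B \<Longrightarrow> m a b \<in> B"
    and BSB: "\<And>a s b. a \<in> B \<Longrightarrow> s \<in> S \<Longrightarrow> b \<in> B \<Longrightarrow> m (m a s) b \<in> B"
    using assms(4) unfolding bi_ideal_def setmult_def by blast+
  have med: "m (m a b) (m c d) = m (m a c) (m b d)"
    if "a \<in> S" "b \<in> S" "c \<in> S" "d \<in> S" for a b c d
  proof -
    have "m (m a b) (m c d) = m (m (m c d) b) a" using LI that cl by blast
    also have "\<dots> = m (m (m b d) c) a" using LI that cl by simp
    also have "\<dots> = m (m a c) (m b d)" using LI that cl by simp
    finally show ?thesis .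
  qed
  have L2: "m a (m b c) = m b (m a c)" if "a \<in> S" "b \<in> S" "c \<in> S" for a b c
  proof -
    have "m a (m b c) = m (m e a) (m b c)" using e that by simp
    also have "\<dots> = m (m e b) (m a c)" using med[of e a b c] e(1) that by blast
    also have "\<dots> = m b (m a c)" using e that by simp
    finally show ?thesis .
  qed
  have para: "m (m a b) (m c d) = m (m d b) (m c a)"
    if "a \<in> S" "b \<in> S" "c \<in> S" "d \<in> S" for a b c d
  proof -
    have "m (m a b) (m c d) = m c (m (m a b) d)" using L2 that cl by simp
    also have "\<dots> = m c (m (m d b) a)" using LI that by simp
    also have "\<dots> = m (m d b) (m c a)" using L2 that cl by simp
    finally show ?thesis .
  qed
  have tS: "t \<in> T \<Longrightarrow> t \<in> S" for t using TS by blast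
  have bS: "b \<in> B \<Longrightarrow> b \<in> S" for b using BS by blast
  have A: "bi_ideal S m (setmult m B T)"
    unfolding bi_ideal_def
  proof (intro conjI)
    show "setmult m B T \<subseteq> S" using cl tS bS by (auto simp: setmult_iff)
    show "setmult m B T \<noteq> {}" using Bne Tne unfolding setmult_def by blast
    show "setmult m (setmult m B T) (setmult m B T) \<subseteq> setmult m B T"
    proof
      fix x assume "x \<in> setmult m (setmult m B T) (setmult m B T)"
      then obtain b1 t1 b2 t2 where h: "b1 \<in> B" "t1 \<in> T" "b2 \<in> B" "t2 \<in> T"
        "x = m (m b1 t1) (m b2 t2)" by (auto simp: setmult_iff)
      then have "x = m (m b1 b2) (m t1 t2)" using med tS bS by simp
      moreover have "m b1 b2 \<in> B" "m t1 t2 \<in> T" using h BB Tl tS by auto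
      ultimately show "x \<in> setmult m B T" using smI by metis
    qed
    show "setmult m (setmult m (setmult m B T) S) (setmult m B T) \<subseteq> setmult m B T"
    proof
      fix x assume "x \<in> setmult m (setmult m (setmult m B T) S) (setmult m B T)"
      then obtain b1 t1 s b2 t2 where h: "b1 \<in> B" "t1 \<in> T" "s \<in> S" "b2 \<in> B" "t2 \<in> T"
        "x = m (m (m b1 t1) s) (m b2 t2)" by (auto simp: setmult_iff)
      then have "x = m (m (m b1 t1) b2) (m s t2)" using med tS bS cl by simp
      also have "\<dots> = m (m (m b2 t1) b1) (m s t2)" using LI h tS bS by simp
      finally have "x = m (m (m b2 t1) b1) (m s t2)" .
      moreover have "m (m b2 t1) b1 \<in> B" "m s t2 \<in> T" using h BSB Tl tS by auto
      ultimately show "x \<in> setmult m B T" using smI by metis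
    qed
  qed
  have B2: "bi_ideal S m (setmult m (setmult m T T) B)"
    unfolding bi_ideal_def
  proof (intro conjI)
    show "setmult m (setmult m T T) B \<subseteq> S" using cl tS bS by (auto simp: setmult_iff)
    show "setmult m (setmult m T T) B \<noteq> {}" using Bne Tne unfolding setmult_def by blast
    show "setmult m (setmult m (setmult m T T) B) (setmult m (setmult m T T) B) \<subseteq> setmult m (setmult m T T) B"
    proof
      fix x assume "x \<in> setmult m (setmult m (setmult m T T) B) (setmult m (setmult m T T) B)"
      then obtain t1 t2 b1 t3 t4 b2 where h: "t1 \<in> T" "t2 \<in> T" "b1 \<in> B" "t3 \<in> T" "t4 \<in> T" "b2 \<in> B"
        "x = m (m (m t1 t2) b1) (m (m t3 t4) b2)" by (auto simp: setmult_iff)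
      then have "x = m (m (m t1 t2) (m t3 t4)) (m b1 b2)" using med tS bS cl by simp
      moreover have "m (m t1 t2) (m t3 t4) \<in> setmult m T T" using h Tl tS by (intro smI) auto
      moreover have "m b1 b2 \<in> B" using h BB by auto
      ultimately show "x \<in> setmult m (setmult m T T) B" using smI by metis
    qed
    show "setmult m (setmult m (setmult m (setmult m T T) B) S) (setmult m (setmult m T T) B) \<subseteq> setmult m (setmult m T T) B"
    proof
      fix x assume "x \<in> setmult m (setmult m (setmult m (setmult m T T) B) S) (setmult m (setmult m T T) B)"
      then obtain t1 t2 b1 s t3 t4 b2 where h: "t1 \<in> T" "t2 \<in> T" "b1 \<in> B" "s \<in> S" "t3 \<in> T" "t4 \<in> T" "b2 \<in> B"
        "x = m (m (m (m t1 t2) b1) s) (m (m t3 t4) b2)" by (auto simp: setmult_iff)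
      define u where "u = m t3 t4"
      define v where "v = m t1 t2"
      define a where "a = m (m v b1) s"
      define c where "c = m (m b2 s) b1"
      have uS: "u \<in> S" and vS: "v \<in> S" and aS: "a \<in> S"
        using h tS bS cl unfolding u_def v_def a_def by auto
      have cB: "c \<in> B" using BSB h unfolding c_def by simp
      hence cS: "c \<in> S" by (rule bS)
      have "x = m u (m a b2)" using h L2 aS uS bS unfolding u_def v_def a_def by simp
      also have "m a b2 = m (m b2 s) (m v b1)" using LI[of "m v b1" s b2] h bS vS cl unfolding a_def by simp
      also have "\<dots> = m v c" using L2[of "m b2 s" v b1] h bS vS cl unfolding c_def by simp
      also have "m u (m v c) = m (m e u) (m v c)" using e uS by simp
      also have "\<dots> = m (m c u) (m v e)" using para[of e u v c] e(1) uS vS cS by blast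
      also have "\<dots> = m (m (m v e) u) c" using LI[of c u "m v e"] e(1) uS vS cS cl by simp
      also have "m (m v e) u = m t3 (m (m v e) t4)" using L2[of "m v e" t3 t4] h tS vS e(1) cl unfolding u_def by simp
      finally have "x = m (m t3 (m (m v e) t4)) c" .
      moreover have "m (m v e) t4 \<in> T" using Tl h vS e cl by simp
      hence "m t3 (m (m v e) t4) \<in> setmult m T T" using h smI by metis
      ultimately show "x \<in> setmult m (setmult m T T) B" using cB smI by metis
    qed
  qed
  show ?thesis using A B2 by simp
qed

end
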